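(* Let $E$ be a finite nonempty set, $f:2^E\to\mathbb{N}$ an integral polymatroid rank function, and let $C_e:\mathbb{N}\times\mathbb{N}\to\mathbb{R}_+$, $e\in E$, be regular functions. Let $D\subseteq\mathbb{N}$ be a set of integers with $\mathbb{B}_f(d)\neq\emptyset$ for all $d\in D$. Then for every $\vec t\in\mathbb{N}^E$, every $d\in D$, every optimal solution $\vec x^*(\vec t,d)$ of $P(\vec t,d)$, every $d'\in D$ and every $\vec t'\in\mathbb{N}^E$, there is an optimal solution $\vec x^*(\vec t',d')$ of $P(\vec t',d')$ that can be obtained from $\vec x^*(\vec t,d)$ by performing at most $\|\vec t-\vec t'\|+|d-d'|$ elementary exchange steps.
   Context: $\mathbb{N}=\{0,1,2,\dots\}$. A set function $f:2^E\to\mathbb{N}$ is an integral polymatroid rank function if $f(\emptyset)=0$, $f$ is monotone and submodular. For $\vec x\in\mathbb{N}^E$, $x(U)=\sum_{e\in U}x_e$; $\mathbb{B}_f(d)=\{\vec x\in\mathbb{N}^E: x(U)\le f(U)\ \forall U\subseteq E,\ x(E)=d\}$. $P(\vec t,d)$: minimize $\sum_{e\in E}C_e(x_e;t_e)$ subject to $\vec x\in\mathbb{B}_f(d)$. $\|\cdot\|$ is the $L_1$-norm. For $C:\mathbb{N}\times\mathbb{N}\to\mathbb{R}$, $C^-(x;t)=C(x;t)-C(x-1;t)$ for $x\ge1$; $C$ is regular if $C^-(x;t)\le C^-(x;t+1)$ and $C^-(x;t+1)\le C^-(x+1;t)$ for all $x\ge1$, $t\in\mathbb{N}$. An elementary exchange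 step modifies the current integral vector either by shifting one unit from one element to another (adding $\chi_g-\chi_e$ for some $e\neq g$, $\chi_e$ the unit vector of $e$) or by adding (or removing) one unit at a single element. *)

theory Defs
  imports Complex_Main
begin

definition polymatroid_rank :: "'a set \<Rightarrow> ('a set \<Rightarrow> nat) \<Rightarrow> bool" where
  "polymatroid_rank E f \<longleftrightarrow>
     f {} = 0 \<and>
     (\<forall>A B. A \<subseteq> B \<and> B \<subseteq> E \<longrightarrow> f A \<le> f B) \<and>
     (\<forall>A B. A \<subseteq> E \<and> B \<subseteq> E \<longrightarrow> f (A \<union> B) + f (A \<inter> B) \<le> f A + f B)"

text \<open>Vectors in N^E are functions 'a => nat vanishing outside E.\<close>
definition base_set :: "'a set \<Rightarrow> ('a set \<Rightarrow> nat) \<Rightarrow> nat \<Rightarrow> ('a \<Rightarrow> nat) set" where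
  "base_set E f d = {x. (\<forall>e. e \<notin> E \<longrightarrow> x e = 0) \<and>
                         (\<forall>U. U \<subseteq> E \<longrightarrow> sum x U \<le> f U) \<and> sum x E = d}"

definition marg :: "(nat \<Rightarrow> nat \<Rightarrow> real) \<Rightarrow> nat \<Rightarrow> nat \<Rightarrow> real" where
  "marg C x t = C x t - C (x - 1) t"

definition regular :: "(nat \<Rightarrow> nat \<Rightarrow> real) \<Rightarrow> bool" where
  "regular C \<longleftrightarrow> (\<forall>x t. x \<ge> 1 \<longrightarrow>
      marg C x t \<le> marg C x (t + 1) \<and> marg C x (t + 1) \<le> marg C (x + 1) t)"

definition total_cost :: "'a set \<Rightarrow> ('a \<Rightarrow> nat \<Rightarrow> nat \<Rightarrow> real) \<Rightarrow> ('a \<Rightarrow> nat) \<Rightarrow> ('a \<Rightarrow> nat) \<Rightarrow> real" where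
  "total_cost E C t x = (\<Sum>e\<in>E. C e (x e) (t e))"

definition optimal :: "'a set \<Rightarrow> ('a set \<Rightarrow> nat) \<Rightarrow> ('a \<Rightarrow> nat \<Rightarrow> nat \<Rightarrow> real)
    \<Rightarrow> ('a \<Rightarrow> nat) \<Rightarrow> nat \<Rightarrow> ('a \<Rightarrow> nat) \<Rightarrow> bool" where
  "optimal E f C t d x \<longleftrightarrow> x \<in> base_set E f d \<and>
     (\<forall>y \<in> base_set E f d. total_cost E C t x \<le> total_cost E C t y)"

definition exch_step :: "'a set \<Rightarrow> ('a \<Rightarrow> nat) \<Rightarrow> ('a \<Rightarrow> nat) \<Rightarrow> bool" where
  "exch_step E x y \<longleftrightarrow>
     (\<exists>e\<in>E. \<exists>g\<in>E. e \<noteq> g \<and> x e \<ge> 1 \<and> y = x(e := x e - 1, g := x g + 1)) \<or>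
     (\<exists>e\<in>E. y = x(e := x e + 1)) \<or>
     (\<exists>e\<in>E. x e \<ge> 1 \<and> y = x(e := x e - 1))"

definition l1_dist :: "'a set \<Rightarrow> ('a \<Rightarrow> nat) \<Rightarrow> ('a \<Rightarrow> nat) \<Rightarrow> nat" where
  "l1_dist E t t' = (\<Sum>e\<in>E. nat \<bar>int (t e) - int (t' e)\<bar>)"

end

theory Submission
  imports Defs
begin

lemma sum_upd_nat:
  fixes x :: "'a \<Rightarrow> nat"
  assumes "finite U"
  shows "sum (x(a := k)) U + (if a \<in> U then x a else 0) = sum x U + (if a \<in> U then k else 0)"
proof (cases "a \<in> U")
  case True
  have "sum (x(a := k)) U = k + sum x (U - {a})"
    using assms True by (simp add: sum.remove)
  moreover have "sum x U = x a + sum x (U - {a})"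
    using assms True by (simp add: sum.remove)
  ultimately show ?thesis using True by simp
next
  case False
  then have "sum (x(a := k)) U = sum x U" by (intro sum.cong) auto
  then show ?thesis using False by simp
qed

lemma base_finite:
  assumes "finite E"
  shows "finite (base_set E f d)"
proof -
  have "base_set E f d \<subseteq> {x. \<forall>e. (e \<in> E \<longrightarrow> x e \<in> {..d}) \<and> (e \<notin> E \<longrightarrow> x e = 0)}"
  proof
    fix x assume x: "x \<in> base_set E f d"
    have "\<forall>e\<in>E. x e \<le> d"
    proof
      fix e assume "e \<in> E"
      then have "x e \<le> sum x E" using assms by (intro member_le_sum) auto
      then show "x e \<le> d" using x by (simp add: base_set_def)
    qed
    then show "x \<in> {x. \<forall>e. (e \<in> E \<longrightarrow> x e \<in> {..d}) \<and> (e \<notin> E \<longrightarrow> x e = 0)}"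
      using x by (auto simp: base_set_def)
  qed
  moreover have "finite {x. \<forall>e. (e \<in> E \<longrightarrow> x e \<in> {..d}) \<and> (e \<notin> E \<longrightarrow> x e = (0::nat))}"
    using assms by (intro finite_set_of_finite_funs) auto
  ultimately show ?thesis by (rule finite_subset)
qed

lemma ex_min_on:
  fixes g :: "'b \<Rightarrow> 'c::linorder"
  assumes "finite S" "S \<noteq> {}"
  shows "\<exists>x\<in>S. \<forall>y\<in>S. g x \<le> g y"
  using assms
proof (induction S rule: finite_ne_induct)
  case (singleton x) then show ?case by auto
next
  case (insert x F)
  then obtain m where m: "m \<in> F" "\<forall>y\<in>F. g m \<le> g y" by auto
  show ?case
  proof (cases "g x \<le> g m")
    case True then show ?thesis using m by (auto intro: order_trans)
  next
    case False
    then have "g m \<le> g x" by simp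
    then have "\<forall>y\<in>insert x F. g m \<le> g y" using m by auto
    then show ?thesis using m(1) by blast
  qed
qed

lemma marg_mono:
  assumes "regular C" "1 \<le> k" "k \<le> l"
  shows "marg C k s \<le> marg C l s"
  using assms(3)
proof (induction l rule: dec_induct)
  case base then show ?case by simp
next
  case (step n)
  have "marg C n s \<le> marg C n (s+1)" "marg C n (s + 1) \<le> marg C (n + 1) s"
    using assms(1,2) step(1) unfolding regular_def by auto
  then show ?case using step by simp
qed

lemma unit_diff:
  fixes u v :: "'a \<Rightarrow> nat"
  assumes "finite E" "\<forall>e. e \<notin> E \<longrightarrow> u e = 0" "\<forall>e. e \<notin> E \<longrightarrow> v e = 0"
    "\<forall>h\<in>E. u h \<le> v h"
  shows "sum v E = sum u E \<Longrightarrow> v = u"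
    and "sum v E = sum u E + 1 \<Longrightarrow> \<exists>g\<in>E. v = u(g := u g + 1)"
proof -
  have eq: "v = u" if s: "sum v E \<le> sum u E"
    and "\<forall>e. e \<notin> E \<longrightarrow> u e = 0" "\<forall>e. e \<notin> E \<longrightarrow> v e = 0" "\<forall>h\<in>E. u h \<le> v h"
    for u v :: "'a \<Rightarrow> nat"
  proof (rule ext)
    fix e
    show "v e = u e"
    proof (cases "e \<in> E")
      case True
      show ?thesis
      proof (rule ccontr)
        assume "v e \<noteq> u e"
        then have "u e < v e" using True that by force
        then have "sum u E < sum v E" using True that assms(1)
          by (intro sum_strict_mono_ex1) auto
        then show False using s by simp
      qed
    next
      case False then show ?thesis using that by simp
    qed
  qed
  show "sum v E = sum u E \<Longrightarrow> v = u" using eq assms by auto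
  assume s1: "sum v E = sum u E + 1"
  have "\<exists>g\<in>E. u g < v g"
  proof (rule ccontr)
    assume "\<not> ?thesis"
    then have "\<forall>h\<in>E. u h = v h" using assms(4) by force
    then have "sum v E = sum u E" by simp
    then show False using s1 by simp
  qed
  then obtain g where g: "g \<in> E" "u g < v g" by blast
  let ?u2 = "u(g := u g + 1)"
  have "sum ?u2 E + u g = sum u E + (u g + 1)"
    using sum_upd_nat[OF assms(1), of u g "u g + 1"] g by simp
  then have "sum v E \<le> sum ?u2 E" using s1 by simp
  moreover have "\<forall>e. e \<notin> E \<longrightarrow> ?u2 e = 0" using assms g by auto
  moreover have "\<forall>h\<in>E. ?u2 h \<le> v h" using assms g by auto
  ultimately have "v = ?u2" using eq[of v ?u2] assms by blast
  then show "\<exists>g\<in>E. v = u(g := u g + 1)" using g by blast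
qed

lemma swap_sum:
  fixes z :: "'a \<Rightarrow> nat"
  assumes "finite U" "g \<noteq> h" "1 \<le> z h"
  shows "sum (z(g := z g + 1, h := z h - 1)) U + (if h\<in>U then 1 else 0)
       = sum z U + (if g \<in> U then 1 else 0)"
proof -
  have a: "sum (z(g := z g + 1)) U + (if g \<in> U then z g else 0) = sum z U + (if g \<in> U then z g + 1 else 0)"
    by (rule sum_upd_nat[OF assms(1)])
  have b: "sum (z(g := z g + 1, h := z h - 1)) U + (if h \<in> U then (z(g := z g + 1)) h else 0)
     = sum (z(g := z g + 1)) U + (if h \<in> U then z h - 1 else 0)"
    by (rule sum_upd_nat[OF assms(1)])
  have c: "(z(g := z g + 1)) h = z h" using assms(2) by simp
  show ?thesis using a b c assms(3) by (auto split: if_splits)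
qed

lemma aux_if1: "(a::nat) + (if P then 1 else 0) = b + (if Q then 1 else 0) \<Longrightarrow> \<not>(Q \<and> \<not> P) \<Longrightarrow> a \<le> b"
  by (auto split: if_splits)
lemma aux_if2: "(a::nat) + (if P then 1 else 0) = b + (if Q then 1 else 0) \<Longrightarrow> Q \<and> \<not> P \<Longrightarrow> a = b + 1"
  by (auto split: if_splits)

lemma swap_mem:
  assumes "finite E" "x \<in> base_set E f d" "g \<in> E" "h \<in> E" "g \<noteq> h" "1 \<le> x h"
    and nt: "\<forall>U. U \<subseteq> E \<and> g \<in> U \<and> h \<notin> U \<longrightarrow> sum x U < f U"
  shows "x(g := x g + 1, h := x h - 1) \<in> base_set E f d"
proof -
  let ?x = "x(g := x g + 1, h := x h - 1)"
  have "\<forall>e. e \<notin> E \<longrightarrow> ?x e = 0" using assms(2,3,4) by (auto simp: base_set_def)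
  moreover have "sum ?x E = d"
  proof -
    have "sum ?x E + 1 = sum x E + 1"
      using swap_sum[of E g h x, OF assms(1) assms(5,6)] assms(3,4) by simp
    then show ?thesis using assms(2) by (simp add: base_set_def)
  qed
  moreover have "sum ?x U \<le> f U" if U: "U \<subseteq> E" for U
  proof -
    have fU: "finite U" using U assms(1) finite_subset by blast
    have le: "sum x U \<le> f U" using assms(2) U by (auto simp: base_set_def)
    have s: "sum ?x U + (if h\<in>U then 1 else 0) = sum x U + (if g \<in> U then 1 else 0)"
      by (rule swap_sum[of U g h x, OF fU assms(5,6)])
    show ?thesis
    proof (cases "g \<in> U \<and> h \<notin> U")
      case True
      then have "sum x U < f U" using nt U by blast
      then show ?thesis using aux_if2[OF s True] by linarith
    next
      case False
      then show ?thesis using aux_if1[OF s] le by (meson order_trans)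
    qed
  qed
  ultimately show ?thesis by (simp add: base_set_def)
qed

lemma tight_un_int:
  fixes x :: "'a \<Rightarrow> nat"
  assumes "finite E" "polymatroid_rank E f" "\<forall>U. U \<subseteq> E \<longrightarrow> sum x U \<le> f U"
    "A \<subseteq> E" "B \<subseteq> E" "sum x A = f A" "sum x B = f B"
  shows "sum x (A \<union> B) = f (A \<union> B)" "sum x (A \<inter> B) = f (A \<inter> B)"
proof -
  have fin: "finite A" "finite B" using assms finite_subset by blast+
  have e: "sum x (A \<union> B) + sum x (A \<inter> B) = sum x A + sum x B"
    using sum.union_inter[OF fin] .
  have sm: "f (A \<union> B) + f (A \<inter> B) \<le> f A + f B" using assms(2,4,5) by (auto simp: polymatroid_rank_def)
  have l1: "sum x (A \<union> B) \<le> f (A \<union> B)" using assms(3,4,5) by auto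
  have l2: "sum x (A \<inter> B) \<le> f (A \<inter> B)" using assms(3,4,5) by (meson inf.coboundedI1)
  show "sum x (A \<union> B) = f (A \<union> B)" "sum x (A \<inter> B) = f (A \<inter> B)"
    using e sm l1 l2 assms(6,7) by linarith+
qed

lemma tight_Union:
  fixes x :: "'a \<Rightarrow> nat"
  assumes "finite E" "polymatroid_rank E f" "\<forall>U. U \<subseteq> E \<longrightarrow> sum x U \<le> f U"
  shows "finite F \<Longrightarrow> \<forall>U\<in>F. U \<subseteq> E \<and> sum x U = f U \<Longrightarrow> sum x (\<Union>F) = f (\<Union>F)"
proof (induction F rule: finite_induct)
  case empty then show ?case using assms(2) by (simp add: polymatroid_rank_def)
next
  case (insert A F)
  have "\<Union>F \<subseteq> E" using insert by auto
  then show ?case using tight_un_int(1)[OF assms, of A "\<Union>F"] insert by auto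
qed

lemma tight_Inter:
  fixes x :: "'a \<Rightarrow> nat"
  assumes "finite E" "polymatroid_rank E f" "\<forall>U. U \<subseteq> E \<longrightarrow> sum x U \<le> f U"
  shows "finite F \<Longrightarrow> F \<noteq> {} \<Longrightarrow> \<forall>U\<in>F. U \<subseteq> E \<and> sum x U = f U \<Longrightarrow> sum x (\<Inter>F) = f (\<Inter>F)"
proof (induction F rule: finite_ne_induct)
  case (singleton A) then show ?case by simp
next
  case (insert A F)
  have "\<Inter>F \<subseteq> E" using insert by auto
  then show ?case using tight_un_int(2)[OF assms, of A "\<Inter>F"] insert by auto
qed

lemma arith1: "(a::nat) < b \<Longrightarrow> c = b + w \<Longrightarrow> d = a + e \<Longrightarrow> F1 + F2 \<le> F3 + F4
  \<Longrightarrow> c \<le> F1 \<Longrightarrow> e \<le> F2 \<Longrightarrow> d = F3 \<Longrightarrow> w = F4 \<Longrightarrow> False"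
  by linarith

lemma exg:
  assumes fE: "finite E" and pm: "polymatroid_rank E f"
    and x: "x \<in> base_set E f dx" and y: "y \<in> base_set E f dy" and "dx \<le> dy"
    and hE: "h \<in> E" and hxy: "y h < x h"
  shows "\<exists>g\<in>E. g \<noteq> h \<and> x g < y g \<and> x(g := x g + 1, h := x h - 1) \<in> base_set E f dx
           \<and> y(g := y g - 1, h := y h + 1) \<in> base_set E f dy"
proof -
  have xle: "\<forall>U. U \<subseteq> E \<longrightarrow> sum x U \<le> f U" and yle: "\<forall>U. U \<subseteq> E \<longrightarrow> sum y U \<le> f U"
    using x y by (auto simp: base_set_def)
  define Wf where "Wf = {U. U \<subseteq> E \<and> h \<notin> U \<and> sum x U = f U}"
  define W where "W = \<Union>Wf"
  have finWf: "finite Wf" using fE unfolding Wf_def by (rule rev_finite_subset[OF finite_Pow_iff[THEN iffD2]]) auto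
  have WE: "W \<subseteq> E" and hW: "h \<notin> W" unfolding W_def Wf_def by auto
  have "\<forall>U\<in>Wf. U \<subseteq> E \<and> sum x U = f U" unfolding Wf_def by blast
  then have Wt: "sum x W = f W" unfolding W_def
    using tight_Union[OF fE pm xle finWf] by blast
  have Wmax: "\<And>U. U \<subseteq> E \<Longrightarrow> h \<notin> U \<Longrightarrow> sum x U = f U \<Longrightarrow> U \<subseteq> W"
    unfolding W_def Wf_def by auto
  define Tf where "Tf = {U. U \<subseteq> E \<and> h \<in> U \<and> sum y U = f U}"
  define T where "T = (if Tf = {} then E else \<Inter>Tf)"
  have finTf: "finite Tf" using fE unfolding Tf_def by (rule rev_finite_subset[OF finite_Pow_iff[THEN iffD2]]) auto
  have TE: "T \<subseteq> E" and hT: "h \<in> T" using hE unfolding T_def Tf_def by auto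
  have Tmin: "\<And>U. U \<subseteq> E \<Longrightarrow> h \<in> U \<Longrightarrow> sum y U = f U \<Longrightarrow> T \<subseteq> U"
    unfolding T_def Tf_def by auto
  have fT: "finite T" "finite W" using TE WE fE finite_subset by blast+
  have "\<exists>g\<in>T - W. x g < y g"
  proof (rule ccontr)
    assume "\<not> ?thesis"
    then have "\<forall>g\<in>T - W. y g \<le> x g" by (meson not_less)
    then have lt: "sum y (T - W) < sum x (T - W)"
      using hT hW hxy fT by (intro sum_strict_mono_ex1) auto
    show False
    proof (cases "Tf = {}")
      case True
      then have TE': "T = E" unfolding T_def by simp
      have "sum x E = sum x (E - W) + sum x W" using sum.subset_diff[OF WE fE] .
      moreover have "sum y E = sum y (E - W) + sum y W" using sum.subset_diff[OF WE fE] .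
      moreover have "sum x E = dx" "sum y E = dy" using x y by (auto simp: base_set_def)
      moreover have "sum y W \<le> f W" using yle WE by auto
      ultimately show False using lt[unfolded TE'] Wt \<open>dx \<le> dy\<close> by (simp only:)
    next
      case False
      have TI: "T = \<Inter>Tf" unfolding T_def using False by simp
      have "\<forall>U\<in>Tf. U \<subseteq> E \<and> sum y U = f U" unfolding Tf_def by blast
      then have Tt: "sum y T = f T" unfolding TI
        using tight_Inter[OF fE pm yle finTf False] by blast
      have u: "sum x (T \<union> W) = sum x (T - W) + sum x W"
        using sum.subset_diff[of W "T \<union> W" x] fT by (simp add: Un_Diff)
      have i: "sum y T = sum y (T - W) + sum y (T \<inter> W)"
        using sum.subset_diff[of "T \<inter> W" T y] fT by (simp add: Diff_Int)
      have sm: "f (T \<union> W) + f (T \<inter> W) \<le> f T + f W" using pm TE WE by (auto simp: polymatroid_rank_def)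
      have l1: "sum x (T \<union> W) \<le> f (T \<union> W)" using xle TE WE by auto
      have l2: "sum y (T \<inter> W) \<le> f (T \<inter> W)" using yle TE WE by (meson inf.coboundedI1)
      show False using arith1[OF lt u i sm l1 l2 Tt Wt] .
    qed
  qed
  then obtain g where g: "g \<in> T" "g \<notin> W" "x g < y g" by blast
  have gE: "g \<in> E" using g TE by auto
  have gh: "g \<noteq> h" using g hxy by auto
  have m1: "x(g := x g + 1, h := x h - 1) \<in> base_set E f dx"
  proof (rule swap_mem[OF fE x gE hE gh])
    show "1 \<le> x h" using hxy by simp
    show "\<forall>U. U \<subseteq> E \<and> g \<in> U \<and> h \<notin> U \<longrightarrow> sum x U < f U"
    proof (intro allI impI)
      fix U assume U: "U \<subseteq> E \<and> g \<in> U \<and> h \<notin> U"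
      have "sum x U \<noteq> f U" using Wmax[of U] U g by auto
      then show "sum x U < f U" using xle U by (simp add: order_less_le)
    qed
  qed
  have m2: "y(h := y h + 1, g := y g - 1) \<in> base_set E f dy"
  proof (rule swap_mem[OF fE y hE gE gh[symmetric]])
    show "1 \<le> y g" using g by simp
    show "\<forall>U. U \<subseteq> E \<and> h \<in> U \<and> g \<notin> U \<longrightarrow> sum y U < f U"
    proof (intro allI impI)
      fix U assume U: "U \<subseteq> E \<and> h \<in> U \<and> g \<notin> U"
      have "sum y U \<noteq> f U" using Tmin[of U] U g by auto
      then show "sum y U < f U" using yle U by (simp add: order_less_le)
    qed
  qed
  have "y(h := y h + 1, g := y g - 1) = y(g := y g - 1, h := y h + 1)"
    using gh by (simp add: fun_upd_twist)
  then show ?thesis using m1 m2 gE gh g by auto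
qed
definition cost :: "'a set \<Rightarrow> ('a \<Rightarrow> nat \<Rightarrow> real) \<Rightarrow> ('a \<Rightarrow> nat) \<Rightarrow> real" where
  "cost E c x = (\<Sum>e\<in>E. c e (x e))"
definition mg :: "('a \<Rightarrow> nat \<Rightarrow> real) \<Rightarrow> 'a \<Rightarrow> nat \<Rightarrow> real" where
  "mg c e k = c e k - c e (k - 1)"
definition idist :: "'a set \<Rightarrow> ('a \<Rightarrow> nat) \<Rightarrow> ('a \<Rightarrow> nat) \<Rightarrow> int" where
  "idist E v u = (\<Sum>e\<in>E. \<bar>int (v e) - int (u e)\<bar>)"

lemma sum_upd_gen:
  fixes F :: "'a \<Rightarrow> 'b \<Rightarrow> 'c::ab_group_add"
  assumes "finite E" "a \<in> E"
  shows "(\<Sum>e\<in>E. F e ((x(a:=k)) e)) = (\<Sum>e\<in>E. F e (x e)) + (F a k - F a (x a))"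
proof -
  have "(\<Sum>e\<in>E. F e ((x(a:=k)) e)) = F a k + (\<Sum>e\<in>E - {a}. F e ((x(a:=k)) e))"
    using assms by (simp add: sum.remove)
  also have "(\<Sum>e\<in>E - {a}. F e ((x(a:=k)) e)) = (\<Sum>e\<in>E - {a}. F e (x e))"
    by (intro sum.cong) auto
  also have "(\<Sum>e\<in>E. F e (x e)) = F a (x a) + (\<Sum>e\<in>E - {a}. F e (x e))"
    using assms by (simp add: sum.remove)
  ultimately show ?thesis by (simp add: algebra_simps)
qed

lemma cost_upd: "finite E \<Longrightarrow> a \<in> E \<Longrightarrow> cost E c (x(a:=k)) = cost E c x + (c a k - c a (x a))"
  unfolding cost_def by (rule sum_upd_gen)

lemma idist_upd: "finite E \<Longrightarrow> a \<in> E \<Longrightarrow>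
   idist E (x(a:=k)) u = idist E x u + (\<bar>int k - int (u a)\<bar> - \<bar>int (x a) - int (u a)\<bar>)"
  unfolding idist_def by (rule sum_upd_gen[where F = "\<lambda>e z. \<bar>int z - int (u e)\<bar>"])

lemma swap_contra:
  assumes fE: "finite E" and pE: "p \<in> E" and qE: "q \<in> E" and pq: "p \<noteq> q"
    and uopt: "\<forall>w\<in>base_set E f du. cost E c u \<le> cost E c w"
    and vopt: "\<forall>w\<in>base_set E f dv. cost E c' v \<le> cost E c' w"
    and vclose: "\<forall>w\<in>base_set E f dv. (\<forall>w'\<in>base_set E f dv. cost E c' w \<le> cost E c' w') \<longrightarrow> idist E v u \<le> idist E w u"
    and vp: "u p < v p" and vq: "v q < u q"
    and v'B: "v(p := v p - 1, q := v q + 1) \<in> base_set E f dv"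
    and u'B: "u(p := u p + 1, q := u q - 1) \<in> base_set E f du"
    and m1: "mg c' q (v q + 1) \<le> mg c q (u q)" and m2: "mg c p (u p + 1) \<le> mg c' p (v p)"
  shows False
proof -
  let ?v' = "v(p := v p - 1, q := v q + 1)"
  let ?u' = "u(p := u p + 1, q := u q - 1)"
  have cv: "cost E c' ?v' = cost E c' v + (c' p (v p - 1) - c' p (v p)) + (c' q (v q + 1) - c' q (v q))"
    using cost_upd[OF fE qE, of c' "v(p := v p - 1)" "v q + 1"] cost_upd[OF fE pE, of c' v "v p - 1"] pq
    by simp
  have cu: "cost E c ?u' = cost E c u + (c p (u p + 1) - c p (u p)) + (c q (u q - 1) - c q (u q))"
    using cost_upd[OF fE qE, of c "u(p := u p + 1)" "u q - 1"] cost_upd[OF fE pE, of c u "u p + 1"] pq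
    by simp
  have "cost E c u \<le> cost E c ?u'" using uopt u'B by blast
  then have "0 \<le> mg c p (u p + 1) - mg c q (u q)" using cu unfolding mg_def by simp
  then have "cost E c' ?v' \<le> cost E c' v" using cv m1 m2 unfolding mg_def by simp
  then have "\<forall>w'\<in>base_set E f dv. cost E c' ?v' \<le> cost E c' w'" using vopt by force
  then have le: "idist E v u \<le> idist E ?v' u" using vclose v'B by blast
  have "idist E ?v' u = idist E v u + (\<bar>int (v p - 1) - int (u p)\<bar> - \<bar>int (v p) - int (u p)\<bar>)
       + (\<bar>int (v q + 1) - int (u q)\<bar> - \<bar>int (v q) - int (u q)\<bar>)"
    using idist_upd[OF fE qE, of "v(p := v p - 1)" "v q + 1" u] idist_upd[OF fE pE, of v "v p - 1" u] pq
    by simp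
  also have "\<dots> = idist E v u - 2" using vp vq by (simp add: of_nat_diff)
  finally show False using le by simp
qed

lemma closest:
  assumes "finite E" "base_set E f d \<noteq> {}"
  shows "\<exists>v\<in>base_set E f d. (\<forall>w\<in>base_set E f d. cost E c v \<le> cost E c w) \<and>
     (\<forall>w\<in>base_set E f d. (\<forall>w'\<in>base_set E f d. cost E c w \<le> cost E c w') \<longrightarrow> idist E v u \<le> idist E w u)"
proof -
  have fin: "finite (base_set E f d)" using base_finite[OF assms(1)] .
  obtain v0 where v0: "v0 \<in> base_set E f d" "\<forall>w\<in>base_set E f d. cost E c v0 \<le> cost E c w"
    using ex_min_on[OF fin assms(2), of "cost E c"] by blast
  let ?O = "{w\<in>base_set E f d. \<forall>w'\<in>base_set E f d. cost E c w \<le> cost E c w'}"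
  have "finite ?O" using fin by simp
  moreover have "?O \<noteq> {}" using v0 by blast
  ultimately obtain v where "v \<in> ?O" "\<forall>w\<in>?O. idist E v u \<le> idist E w u"
    using ex_min_on[of ?O "\<lambda>w. idist E w u"] by blast
  then show ?thesis by blast
qed
lemma comb:
  fixes u v :: "'a \<Rightarrow> nat"
  assumes fE: "finite E" and su: "\<forall>e. e \<notin> E \<longrightarrow> u e = 0" and sv: "\<forall>e. e \<notin> E \<longrightarrow> v e = 0"
    and aE: "a \<in> E" and le: "\<forall>h\<in>E. h \<noteq> a \<longrightarrow> u h \<le> v h" and la: "u a \<le> v a + 1"
    and s: "sum u E = sum v E"
  shows "v = u \<or> (\<exists>g\<in>E. g \<noteq> a \<and> 1 \<le> u a \<and> v = u(a := u a - 1, g := u g + 1))"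
proof (cases "u a \<le> v a")
  case True
  then have "\<forall>h\<in>E. u h \<le> v h" using le by auto
  then show ?thesis using unit_diff(1)[OF fE su sv] s by auto
next
  case False
  then have ua: "u a = v a + 1" using la by simp
  define u1 where "u1 = u(a := v a)"
  have su1: "\<forall>e. e \<notin> E \<longrightarrow> u1 e = 0" using su aE unfolding u1_def by auto
  have le1: "\<forall>h\<in>E. u1 h \<le> v h" using le unfolding u1_def by auto
  have "sum u1 E + (if a \<in> E then u a else 0) = sum u E + (if a \<in> E then v a else 0)"
    unfolding u1_def by (rule sum_upd_nat[OF fE])
  then have "sum v E = sum u1 E + 1" using aE ua s by simp
  then obtain g where g: "g \<in> E" "v = u1(g := u1 g + 1)"
    using unit_diff(2)[OF fE su1 sv le1] by blast
  have ga: "g \<noteq> a"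
  proof
    assume "g = a"
    then have "v a = u1 a + 1" using g(2) by (metis fun_upd_same)
    then show False unfolding u1_def by simp
  qed
  have "v = u(a := u a - 1, g := u g + 1)" using g(2) ga ua unfolding u1_def by auto
  then show ?thesis using g(1) ga ua by auto
qed

lemma base_dec:
  assumes fE: "finite E" and x: "x \<in> base_set E f d" and d: "1 \<le> d"
  shows "\<exists>e\<in>E. 1 \<le> x e \<and> x(e := x e - 1) \<in> base_set E f (d - 1)"
proof -
  have "\<exists>e\<in>E. x e \<noteq> 0"
  proof (rule ccontr)
    assume "\<not> ?thesis"
    then have "sum x E = 0" by simp
    then show False using x d by (simp add: base_set_def)
  qed
  then obtain e where e: "e \<in> E" "1 \<le> x e" by (auto simp: not_less_eq_eq)
  let ?y = "x(e := x e - 1)"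
  have "\<forall>e'. e' \<notin> E \<longrightarrow> ?y e' = 0" using x e by (auto simp: base_set_def)
  moreover have "sum ?y E = d - 1"
  proof -
    have "sum ?y E + (if e \<in> E then x e else 0) = sum x E + (if e \<in> E then x e - 1 else 0)"
      by (rule sum_upd_nat[OF fE])
    then show ?thesis using e x by (simp add: base_set_def)
  qed
  moreover have "sum ?y U \<le> f U" if U: "U \<subseteq> E" for U
  proof -
    have fU: "finite U" using U fE finite_subset by blast
    have "sum ?y U + (if e \<in> U then x e else 0) = sum x U + (if e \<in> U then x e - 1 else 0)"
      by (rule sum_upd_nat[OF fU])
    then have "sum ?y U \<le> sum x U" by (auto split: if_splits)
    then show ?thesis using x U by (auto simp: base_set_def)
  qed
  ultimately have "?y \<in> base_set E f (d - 1)" unfolding base_set_def by blast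
  then show ?thesis using e by blast
qed

lemma opt_cost: "optimal E f C t d x \<longleftrightarrow> x \<in> base_set E f d \<and>
   (\<forall>y\<in>base_set E f d. cost E (\<lambda>e k. C e k (t e)) x \<le> cost E (\<lambda>e k. C e k (t e)) y)"
  unfolding optimal_def total_cost_def cost_def by simp

lemma mg_C: "mg (\<lambda>e k. C e k (t e)) e k = marg (C e) k (t e)"
  unfolding mg_def marg_def by simp

lemma mgmono:
  assumes "regular (C e)" "1 \<le> k" "k \<le> l"
  shows "mg (\<lambda>e k. C e k (t e)) e k \<le> mg (\<lambda>e k. C e k (t e)) e l"
  unfolding mg_C using marg_mono[OF assms] .

lemma d_up:
  assumes fE: "finite E" and pm: "polymatroid_rank E f" and reg: "\<forall>e\<in>E. regular (C e)"
    and opt: "optimal E f C t d x" and ne: "base_set E f (d + 1) \<noteq> {}"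
  shows "\<exists>y. optimal E f C t (d + 1) y \<and> exch_step E x y"
proof -
  define c where "c = (\<lambda>e k. C e k (t e))"
  have xB: "x \<in> base_set E f d" and xo: "\<forall>w\<in>base_set E f d. cost E c x \<le> cost E c w"
    using opt unfolding opt_cost c_def by auto
  obtain v where vB: "v \<in> base_set E f (d+1)" and vo: "\<forall>w\<in>base_set E f (d+1). cost E c v \<le> cost E c w"
    and vc: "\<forall>w\<in>base_set E f (d+1). (\<forall>w'\<in>base_set E f (d+1). cost E c w \<le> cost E c w') \<longrightarrow> idist E v x \<le> idist E w x"
    using closest[OF fE ne, of c x] by blast
  have le: "\<forall>h\<in>E. x h \<le> v h"
  proof (rule ccontr)
    assume "\<not> ?thesis"
    then obtain h where h: "h \<in> E" "v h < x h" by (auto simp: not_le)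
    obtain g where g: "g \<in> E" "g \<noteq> h" "x g < v g" "x(g := x g + 1, h := x h - 1) \<in> base_set E f d"
      "v(g := v g - 1, h := v h + 1) \<in> base_set E f (d+1)"
      using exg[OF fE pm xB vB _ h] by auto
    show False
    proof (rule swap_contra[OF fE g(1) h(1) g(2) xo vo vc g(3) h(2) g(5) g(4)])
      show "mg c h (v h + 1) \<le> mg c h (x h)" unfolding c_def
        using mgmono[of C h "v h + 1" "x h"] reg h by auto
      show "mg c g (x g + 1) \<le> mg c g (v g)" unfolding c_def
        using mgmono[of C g "x g + 1" "v g"] reg g by auto
    qed
  qed
  have sx: "\<forall>e. e \<notin> E \<longrightarrow> x e = 0" "sum x E = d" using xB by (auto simp: base_set_def)
  have sv: "\<forall>e. e \<notin> E \<longrightarrow> v e = 0" "sum v E = d + 1" using vB by (auto simp: base_set_def)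
  obtain g where "g \<in> E" "v = x(g := x g + 1)"
    using unit_diff(2)[OF fE sx(1) sv(1) le] sx sv by auto
  then have "exch_step E x v" unfolding exch_step_def by blast
  moreover have "optimal E f C t (d + 1) v" unfolding opt_cost using vB vo c_def by simp
  ultimately show ?thesis by blast
qed

lemma d_down:
  assumes fE: "finite E" and pm: "polymatroid_rank E f" and reg: "\<forall>e\<in>E. regular (C e)"
    and opt: "optimal E f C t d x" and d1: "1 \<le> d"
  shows "\<exists>y. optimal E f C t (d - 1) y \<and> exch_step E x y"
proof -
  define c where "c = (\<lambda>e k. C e k (t e))"
  have xB: "x \<in> base_set E f d" and xo: "\<forall>w\<in>base_set E f d. cost E c x \<le> cost E c w"
    using opt unfolding opt_cost c_def by auto
  have ne: "base_set E f (d - 1) \<noteq> {}" using base_dec[OF fE xB d1] by blast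
  obtain v where vB: "v \<in> base_set E f (d-1)" and vo: "\<forall>w\<in>base_set E f (d-1). cost E c v \<le> cost E c w"
    and vc: "\<forall>w\<in>base_set E f (d-1). (\<forall>w'\<in>base_set E f (d-1). cost E c w \<le> cost E c w') \<longrightarrow> idist E v x \<le> idist E w x"
    using closest[OF fE ne, of c x] by blast
  have le: "\<forall>e\<in>E. v e \<le> x e"
  proof (rule ccontr)
    assume "\<not> ?thesis"
    then obtain e where e: "e \<in> E" "x e < v e" by (auto simp: not_le)
    obtain g where g: "g \<in> E" "g \<noteq> e" "v g < x g" "v(g := v g + 1, e := v e - 1) \<in> base_set E f (d-1)"
      "x(g := x g - 1, e := x e + 1) \<in> base_set E f d"
      using exg[OF fE pm vB xB _ e] by auto
    have t1: "v(e := v e - 1, g := v g + 1) \<in> base_set E f (d-1)" using g(4) g(2) by (simp add: fun_upd_twist)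
    have t2: "x(e := x e + 1, g := x g - 1) \<in> base_set E f d" using g(5) g(2) by (simp add: fun_upd_twist)
    show False
    proof (rule swap_contra[OF fE e(1) g(1) g(2)[symmetric] xo vo vc e(2) g(3) t1 t2])
      show "mg c g (v g + 1) \<le> mg c g (x g)" unfolding c_def
        using mgmono[of C g "v g + 1" "x g"] reg g by auto
      show "mg c e (x e + 1) \<le> mg c e (v e)" unfolding c_def
        using mgmono[of C e "x e + 1" "v e"] reg e by auto
    qed
  qed
  have sx: "\<forall>e. e \<notin> E \<longrightarrow> x e = 0" "sum x E = d" using xB by (auto simp: base_set_def)
  have sv: "\<forall>e. e \<notin> E \<longrightarrow> v e = 0" "sum v E = d - 1" using vB by (auto simp: base_set_def)
  obtain g where g: "g \<in> E" "x = v(g := v g + 1)"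
    using unit_diff(2)[OF fE sv(1) sx(1) le] sx sv d1 by auto
  have "1 \<le> x g" using g by (metis fun_upd_same le_add2)
  moreover have "v = x(g := x g - 1)" using g(2) by (auto simp: fun_eq_iff)
  ultimately have "exch_step E x v" unfolding exch_step_def using g(1) by blast
  moreover have "optimal E f C t (d - 1) v" unfolding opt_cost using vB vo c_def by simp
  ultimately show ?thesis by blast
qed
lemma reg_facts:
  assumes "regular C" "1 \<le> k"
  shows "marg C k s \<le> marg C k (s + 1)" "marg C k (s + 1) \<le> marg C (k + 1) s"
  using assms unfolding regular_def by auto

lemma t_up:
  assumes fE: "finite E" and pm: "polymatroid_rank E f" and reg: "\<forall>e\<in>E. regular (C e)"
    and opt: "optimal E f C t d x" and aE: "a \<in> E"
  shows "\<exists>y k. optimal E f C (t(a := t a + 1)) d y \<and> k \<le> 1 \<and> (exch_step E ^^ k) x y"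
proof -
  define t' where "t' = t(a := t a + 1)"
  define c where "c = (\<lambda>e k. C e k (t e))"
  define c' where "c' = (\<lambda>e k. C e k (t' e))"
  have xB: "x \<in> base_set E f d" and xo: "\<forall>w\<in>base_set E f d. cost E c x \<le> cost E c w"
    using opt unfolding opt_cost c_def by auto
  have ne: "base_set E f d \<noteq> {}" using xB by blast
  obtain v where vB: "v \<in> base_set E f d" and vo: "\<forall>w\<in>base_set E f d. cost E c' v \<le> cost E c' w"
    and vc: "\<forall>w\<in>base_set E f d. (\<forall>w'\<in>base_set E f d. cost E c' w \<le> cost E c' w') \<longrightarrow> idist E v x \<le> idist E w x"
    using closest[OF fE ne, of c' x] by blast
  have mgc: "mg c e k = marg (C e) k (t e)" "mg c' e k = marg (C e) k (t' e)" for e k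
    unfolding c_def c'_def mg_C by simp_all
  have claim: "\<forall>h\<in>E. v h < x h \<longrightarrow> h = a \<and> x a < v a + 2"
  proof (rule ccontr)
    assume "\<not> ?thesis"
    then obtain h where h: "h \<in> E" "v h < x h" and nh: "\<not> (h = a \<and> x a < v a + 2)" by blast
    obtain g where g: "g \<in> E" "g \<noteq> h" "x g < v g" "x(g := x g + 1, h := x h - 1) \<in> base_set E f d"
      "v(g := v g - 1, h := v h + 1) \<in> base_set E f d"
      using exg[OF fE pm xB vB _ h] by auto
    show False
    proof (rule swap_contra[OF fE g(1) h(1) g(2) xo vo vc g(3) h(2) g(5) g(4)])
      show "mg c' h (v h + 1) \<le> mg c h (x h)"
      proof (cases "h = a")
        case True
        then have "v a + 2 \<le> x a" using nh by simp
        moreover have "marg (C a) (v a + 1) (t a + 1) \<le> marg (C a) (v a + 1 + 1) (t a)"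
          using reg_facts(2)[of "C a" "v a + 1" "t a"] reg aE by auto
        moreover have "marg (C a) (v a + 1 + 1) (t a) \<le> marg (C a) (x a) (t a)"
          using marg_mono[of "C a" "v a + 1 + 1" "x a" "t a"] reg aE calculation(1) by auto
        ultimately show ?thesis unfolding mgc t'_def using True by simp
      next
        case False
        then show ?thesis unfolding mgc t'_def
          using marg_mono[of "C h" "v h + 1" "x h"] reg h by auto
      qed
      show "mg c g (x g + 1) \<le> mg c' g (v g)"
      proof (cases "g = a")
        case True
        have "marg (C a) (x a + 1) (t a) \<le> marg (C a) (v a) (t a)"
          using marg_mono[of "C a" "x a + 1" "v a"] reg aE g(3) True by auto
        moreover have "marg (C a) (v a) (t a) \<le> marg (C a) (v a) (t a + 1)"
          using reg_facts(1)[of "C a" "v a" "t a"] reg aE g(3) True by auto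
        ultimately show ?thesis unfolding mgc t'_def using True by simp
      next
        case False
        then show ?thesis unfolding mgc t'_def
          using marg_mono[of "C g" "x g + 1" "v g"] reg g by auto
      qed
    qed
  qed
  have sx: "\<forall>e. e \<notin> E \<longrightarrow> x e = 0" "sum x E = d" using xB by (auto simp: base_set_def)
  have sv: "\<forall>e. e \<notin> E \<longrightarrow> v e = 0" "sum v E = d" using vB by (auto simp: base_set_def)
  have le: "\<forall>h\<in>E. h \<noteq> a \<longrightarrow> x h \<le> v h" using claim by (auto simp: not_less[symmetric])
  have la: "x a \<le> v a + 1" using claim aE by fastforce
  have vopt: "optimal E f C t' d v" unfolding opt_cost using vB vo c'_def by simp
  from comb[OF fE sx(1) sv(1) aE le la] sx(2) sv(2)
  have "v = x \<or> (\<exists>g\<in>E. g \<noteq> a \<and> 1 \<le> x a \<and> v = x(a := x a - 1, g := x g + 1))" by simp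
  then show ?thesis
  proof
    assume "v = x"
    then have "(exch_step E ^^ 0) x v" by simp
    then show ?thesis using vopt unfolding t'_def by blast
  next
    assume "\<exists>g\<in>E. g \<noteq> a \<and> 1 \<le> x a \<and> v = x(a := x a - 1, g := x g + 1)"
    then obtain g where g: "g \<in> E" "a \<noteq> g" "1 \<le> x a" "v = x(a := x a - 1, g := x g + 1)" by blast
    have "exch_step E x v" unfolding exch_step_def
      by (rule disjI1, rule bexI[OF _ aE], rule bexI[OF _ g(1)]) (use g in blast)
    then have "(exch_step E ^^ 1) x v" by (metis relpowp_1)
    then show ?thesis using vopt unfolding t'_def by blast
  qed
qed

lemma t_down:
  assumes fE: "finite E" and pm: "polymatroid_rank E f" and reg: "\<forall>e\<in>E. regular (C e)"
    and opt: "optimal E f C t d x" and aE: "a \<in> E" and ta: "1 \<le> t a"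
  shows "\<exists>y k. optimal E f C (t(a := t a - 1)) d y \<and> k \<le> 1 \<and> (exch_step E ^^ k) x y"
proof -
  define s where "s = t a - 1"
  have ts: "t a = s + 1" using ta unfolding s_def by simp
  define t' where "t' = t(a := t a - 1)"
  define c where "c = (\<lambda>e k. C e k (t e))"
  define c' where "c' = (\<lambda>e k. C e k (t' e))"
  have xB: "x \<in> base_set E f d" and xo: "\<forall>w\<in>base_set E f d. cost E c x \<le> cost E c w"
    using opt unfolding opt_cost c_def by auto
  have ne: "base_set E f d \<noteq> {}" using xB by blast
  obtain v where vB: "v \<in> base_set E f d" and vo: "\<forall>w\<in>base_set E f d. cost E c' v \<le> cost E c' w"
    and vc: "\<forall>w\<in>base_set E f d. (\<forall>w'\<in>base_set E f d. cost E c' w \<le> cost E c' w') \<longrightarrow> idist E v x \<le> idist E w x"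
    using closest[OF fE ne, of c' x] by blast
  have mgc: "mg c e k = marg (C e) k (t e)" "mg c' e k = marg (C e) k (t' e)" for e k
    unfolding c_def c'_def mg_C by simp_all
  have t'a: "t' a = s" "t a = s + 1" unfolding t'_def s_def using ts by auto
  have claim: "\<forall>e\<in>E. x e < v e \<longrightarrow> e = a \<and> v a < x a + 2"
  proof (rule ccontr)
    assume "\<not> ?thesis"
    then obtain e where e: "e \<in> E" "x e < v e" and ne: "\<not> (e = a \<and> v a < x a + 2)" by blast
    obtain g where g: "g \<in> E" "g \<noteq> e" "v g < x g" "v(g := v g + 1, e := v e - 1) \<in> base_set E f d"
      "x(g := x g - 1, e := x e + 1) \<in> base_set E f d"
      using exg[OF fE pm vB xB _ e] by auto
    have t1: "v(e := v e - 1, g := v g + 1) \<in> base_set E f d" using g(4) g(2) by (simp add: fun_upd_twist)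
    have t2: "x(e := x e + 1, g := x g - 1) \<in> base_set E f d" using g(5) g(2) by (simp add: fun_upd_twist)
    show False
    proof (rule swap_contra[OF fE e(1) g(1) g(2)[symmetric] xo vo vc e(2) g(3) t1 t2])
      show "mg c' g (v g + 1) \<le> mg c g (x g)"
      proof (cases "g = a")
        case True
        have "marg (C a) (v a + 1) s \<le> marg (C a) (v a + 1) (s + 1)"
          using reg_facts(1)[of "C a" "v a + 1" s] reg aE by auto
        moreover have "marg (C a) (v a + 1) (s + 1) \<le> marg (C a) (x a) (s + 1)"
          using marg_mono[of "C a" "v a + 1" "x a"] reg aE g(3) True by auto
        ultimately show ?thesis unfolding mgc using True t'a by simp
      next
        case False
        then show ?thesis unfolding mgc t'_def
          using marg_mono[of "C g" "v g + 1" "x g"] reg g by auto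
      qed
      show "mg c e (x e + 1) \<le> mg c' e (v e)"
      proof (cases "e = a")
        case True
        then have va: "x a + 2 \<le> v a" using ne by simp
        have "marg (C a) (x a + 1) (s + 1) \<le> marg (C a) (x a + 1 + 1) s"
          using reg_facts(2)[of "C a" "x a + 1" s] reg aE by auto
        moreover have "marg (C a) (x a + 1 + 1) s \<le> marg (C a) (v a) s"
          using marg_mono[of "C a" "x a + 1 + 1" "v a" s] reg aE va by auto
        ultimately show ?thesis unfolding mgc using True t'a by simp
      next
        case False
        then show ?thesis unfolding mgc t'_def
          using marg_mono[of "C e" "x e + 1" "v e"] reg e by auto
      qed
    qed
  qed
  have sx: "\<forall>e. e \<notin> E \<longrightarrow> x e = 0" "sum x E = d" using xB by (auto simp: base_set_def)
  have sv: "\<forall>e. e \<notin> E \<longrightarrow> v e = 0" "sum v E = d" using vB by (auto simp: base_set_def)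
  have le: "\<forall>h\<in>E. h \<noteq> a \<longrightarrow> v h \<le> x h" using claim by (auto simp: not_less[symmetric])
  have la: "v a \<le> x a + 1" using claim aE by fastforce
  have vopt: "optimal E f C t' d v" unfolding opt_cost using vB vo c'_def by simp
  from comb[OF fE sv(1) sx(1) aE le la] sx(2) sv(2)
  have "x = v \<or> (\<exists>g\<in>E. g \<noteq> a \<and> 1 \<le> v a \<and> x = v(a := v a - 1, g := v g + 1))" by simp
  then show ?thesis
  proof
    assume "x = v"
    then have "(exch_step E ^^ 0) x v" by simp
    then show ?thesis using vopt unfolding t'_def by blast
  next
    assume "\<exists>g\<in>E. g \<noteq> a \<and> 1 \<le> v a \<and> x = v(a := v a - 1, g := v g + 1)"
    then obtain g where g: "g \<in> E" "g \<noteq> a" "1 \<le> v a" "x = v(a := v a - 1, g := v g + 1)" by blast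
    have "1 \<le> x g" using g by simp
    moreover have "v = x(g := x g - 1, a := x a + 1)" using g by (auto simp: fun_eq_iff)
    ultimately have "exch_step E x v" unfolding exch_step_def
      by (intro disjI1 bexI[OF _ g(1)] bexI[OF _ aE]) (use g in blast)
    then have "(exch_step E ^^ 1) x v" by (metis relpowp_1)
    then show ?thesis using vopt unfolding t'_def by blast
  qed
qed
lemma steps_add: "(R ^^ m) x y \<Longrightarrow> (R ^^ n) y z \<Longrightarrow> (R ^^ (m + n)) x z"
  by (auto simp: relpowp_add)

lemma d_move_up:
  assumes fE: "finite E" and pm: "polymatroid_rank E f" and reg: "\<forall>e\<in>E. regular (C e)"
  shows "\<forall>x d. optimal E f C t d x \<longrightarrow> base_set E f (d + n) \<noteq> {} \<longrightarrow>
     (\<exists>y k. optimal E f C t (d + n) y \<and> k \<le> n \<and> (exch_step E ^^ k) x y)"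
proof (induction n)
  case 0
  show ?case by (intro allI impI, rule exI, rule exI[of _ 0]) simp
next
  case (Suc n)
  show ?case
  proof (intro allI impI)
    fix x d assume opt: "optimal E f C t d x" and ne: "base_set E f (d + Suc n) \<noteq> {}"
    then obtain z where "z \<in> base_set E f (d + Suc n)" by blast
    then have "base_set E f (d + Suc n - 1) \<noteq> {}" using base_dec[OF fE, of z f "d + Suc n"] by auto
    then have "base_set E f (d + n) \<noteq> {}" by simp
    then obtain y k where y: "optimal E f C t (d + n) y" "k \<le> n" "(exch_step E ^^ k) x y"
      using Suc.IH opt by blast
    obtain z where z: "optimal E f C t (d + n + 1) z" "exch_step E y z"
      using d_up[OF fE pm reg y(1)] ne by auto
    have s1: "(exch_step E ^^ 1) y z" using z(2) by (metis relpowp_1)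
    have "(exch_step E ^^ Suc k) x z" using steps_add[OF y(3) s1] by simp
    then show "\<exists>y k. optimal E f C t (d + Suc n) y \<and> k \<le> Suc n \<and> (exch_step E ^^ k) x y"
      using z(1) y(2) by (intro exI[of _ z] exI[of _ "Suc k"]) simp
  qed
qed

lemma d_move_down:
  assumes fE: "finite E" and pm: "polymatroid_rank E f" and reg: "\<forall>e\<in>E. regular (C e)"
  shows "\<forall>x d. optimal E f C t d x \<longrightarrow> n \<le> d \<longrightarrow>
     (\<exists>y k. optimal E f C t (d - n) y \<and> k \<le> n \<and> (exch_step E ^^ k) x y)"
proof (induction n)
  case 0
  show ?case by (intro allI impI, rule exI, rule exI[of _ 0]) simp
next
  case (Suc n)
  show ?case
  proof (intro allI impI)
    fix x d assume opt: "optimal E f C t d x" and le: "Suc n \<le> d"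
    have nd: "n \<le> d" using le by simp
    obtain y k where y: "optimal E f C t (d - n) y" "k \<le> n" "(exch_step E ^^ k) x y"
      using Suc.IH opt nd by blast
    have d1: "1 \<le> d - n" using le by simp
    obtain z where z: "optimal E f C t (d - n - 1) z" "exch_step E y z"
      using d_down[OF fE pm reg y(1) d1] by blast
    have s1: "(exch_step E ^^ 1) y z" using z(2) by (metis relpowp_1)
    have "(exch_step E ^^ Suc k) x z" using steps_add[OF y(3) s1] by simp
    then show "\<exists>y k. optimal E f C t (d - Suc n) y \<and> k \<le> Suc n \<and> (exch_step E ^^ k) x y"
      using z(1) y(2) by (intro exI[of _ z] exI[of _ "Suc k"]) (simp add: diff_diff_add)
  qed
qed

lemma l1_upd:
  assumes "finite E" "a \<in> E"
  shows "l1_dist E (t(a := k)) t' + nat \<bar>int (t a) - int (t' a)\<bar> = l1_dist E t t' + nat \<bar>int k - int (t' a)\<bar>"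
proof -
  have "l1_dist E (t(a := k)) t' = nat \<bar>int k - int (t' a)\<bar> + (\<Sum>e\<in>E - {a}. nat \<bar>int ((t(a:=k)) e) - int (t' e)\<bar>)"
    unfolding l1_dist_def using assms by (simp add: sum.remove)
  moreover have "(\<Sum>e\<in>E - {a}. nat \<bar>int ((t(a:=k)) e) - int (t' e)\<bar>) = (\<Sum>e\<in>E - {a}. nat \<bar>int (t e) - int (t' e)\<bar>)"
    by (intro sum.cong) auto
  moreover have "l1_dist E t t' = nat \<bar>int (t a) - int (t' a)\<bar> + (\<Sum>e\<in>E - {a}. nat \<bar>int (t e) - int (t' e)\<bar>)"
    unfolding l1_dist_def using assms by (simp add: sum.remove)
  ultimately show ?thesis by simp
qed

lemma t_move:
  assumes fE: "finite E" and pm: "polymatroid_rank E f" and reg: "\<forall>e\<in>E. regular (C e)"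
  shows "\<forall>t x. l1_dist E t t' = n \<longrightarrow> optimal E f C t d x \<longrightarrow>
     (\<exists>y k. optimal E f C t' d y \<and> k \<le> n \<and> (exch_step E ^^ k) x y)"
proof (induction n)
  case 0
  show ?case
  proof (intro allI impI)
    fix t x assume l: "l1_dist E t t' = 0" and opt: "optimal E f C t d x"
    have "\<forall>e\<in>E. nat \<bar>int (t e) - int (t' e)\<bar> = 0" using l fE unfolding l1_dist_def by simp
    then have teq: "\<forall>e\<in>E. t e = t' e" by auto
    have "total_cost E C t w = total_cost E C t' w" for w
      unfolding total_cost_def using teq by (intro sum.cong) auto
    then have "optimal E f C t' d x" using opt unfolding optimal_def by simp
    then show "\<exists>y k. optimal E f C t' d y \<and> k \<le> 0 \<and> (exch_step E ^^ k) x y"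
      by (intro exI[of _ x] exI[of _ 0]) simp
  qed
next
  case (Suc n)
  show ?case
  proof (intro allI impI)
    fix t x assume l: "l1_dist E t t' = Suc n" and opt: "optimal E f C t d x"
    have "\<exists>a\<in>E. t a \<noteq> t' a"
    proof (rule ccontr)
      assume "\<not> ?thesis"
      then have "l1_dist E t t' = 0" unfolding l1_dist_def by simp
      then show False using l by simp
    qed
    then obtain a where aE: "a \<in> E" and ne: "t a \<noteq> t' a" by blast
    obtain t1 y1 k1 where t1: "l1_dist E t1 t' = n" and y1: "optimal E f C t1 d y1" "k1 \<le> 1"
      "(exch_step E ^^ k1) x y1"
    proof (cases "t a < t' a")
      case True
      obtain y1 k1 where "optimal E f C (t(a := t a + 1)) d y1" "k1 \<le> 1" "(exch_step E ^^ k1) x y1"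
        using t_up[OF fE pm reg opt aE] by blast
      moreover have "l1_dist E (t(a := t a + 1)) t' = n"
        using l1_upd[OF fE aE, of t "t a + 1" t'] l True by simp
      ultimately show ?thesis using that by blast
    next
      case False
      then have ta: "1 \<le> t a" using ne by simp
      obtain y1 k1 where "optimal E f C (t(a := t a - 1)) d y1" "k1 \<le> 1" "(exch_step E ^^ k1) x y1"
        using t_down[OF fE pm reg opt aE ta] by blast
      moreover have "l1_dist E (t(a := t a - 1)) t' = n"
        using l1_upd[OF fE aE, of t "t a - 1" t'] l False ne ta by (simp add: of_nat_diff)
      ultimately show ?thesis using that by blast
    qed
    obtain y k where y: "optimal E f C t' d y" "k \<le> n" "(exch_step E ^^ k) y1 y"
      using Suc.IH t1 y1(1) by blast
    have "(exch_step E ^^ (k1 + k)) x y" using steps_add[OF y1(3) y(3)] .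
    then show "\<exists>y k. optimal E f C t' d y \<and> k \<le> Suc n \<and> (exch_step E ^^ k) x y"
      using y(1,2) y1(2) by (intro exI[of _ y] exI[of _ "k1 + k"]) simp
  qed
qed

theorem corollary3p6:
  fixes E :: "'a set" and f :: "'a set \<Rightarrow> nat" and C :: "'a \<Rightarrow> nat \<Rightarrow> nat \<Rightarrow> real"
    and D :: "nat set"
  assumes "finite E" and "E \<noteq> {}"
    and "polymatroid_rank E f"
    and "\<And>e x t. e \<in> E \<Longrightarrow> C e x t \<ge> 0"
    and "\<And>e. e \<in> E \<Longrightarrow> regular (C e)"
    and "\<And>d. d \<in> D \<Longrightarrow> base_set E f d \<noteq> {}"
  shows "\<forall>t d x t' d'. d \<in> D \<longrightarrow> optimal E f C t d x \<longrightarrow> d' \<in> D \<longrightarrow>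
           (\<exists>x' k. optimal E f C t' d' x' \<and>
                   k \<le> l1_dist E t t' + nat \<bar>int d - int d'\<bar> \<and>
                   (exch_step E ^^ k) x x')"
proof (intro allI impI)
  fix t d x t' d'
  assume dD: "d \<in> D" and opt: "optimal E f C t d x" and d'D: "d' \<in> D"
  have fE: "finite E" and pm: "polymatroid_rank E f" and reg: "\<forall>e\<in>E. regular (C e)"
    using assms by auto
  obtain y k1 where y: "optimal E f C t d' y" "k1 \<le> nat \<bar>int d - int d'\<bar>" "(exch_step E ^^ k1) x y"
  proof (cases "d \<le> d'")
    case True
    have "base_set E f (d + (d' - d)) \<noteq> {}" using assms(6)[OF d'D] True by simp
    then obtain y k1 where yy: "optimal E f C t (d + (d' - d)) y" "k1 \<le> d' - d" "(exch_step E ^^ k1) x y"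
      using d_move_up[OF fE pm reg, of t "d' - d"] opt by blast
    have e1: "d + (d' - d) = d'" using True by simp
    have e2: "nat \<bar>int d - int d'\<bar> = d' - d" using True by auto
    have "k1 \<le> nat \<bar>int d - int d'\<bar>" by (subst e2) (rule yy(2))
    then show ?thesis using that[of y k1] yy(1,3) e1 by simp
  next
    case False
    obtain y k1 where yy: "optimal E f C t (d - (d - d')) y" "k1 \<le> d - d'" "(exch_step E ^^ k1) x y"
      using d_move_down[OF fE pm reg, of t "d - d'"] opt diff_le_self by blast
    have e1: "d - (d - d') = d'" using False by simp
    have e2: "nat \<bar>int d - int d'\<bar> = d - d'" using False by auto
    have "k1 \<le> nat \<bar>int d - int d'\<bar>" by (subst e2) (rule yy(2))
    then show ?thesis using that[of y k1] yy(1,3) e1 by simp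
  qed
  obtain z k2 where z: "optimal E f C t' d' z" "k2 \<le> l1_dist E t t'" "(exch_step E ^^ k2) y z"
    using t_move[OF fE pm reg, of t' "l1_dist E t t'" d'] y(1) by blast
  have "(exch_step E ^^ (k1 + k2)) x z" using steps_add[OF y(3) z(3)] .
  then show "\<exists>x' k. optimal E f C t' d' x' \<and> k \<le> l1_dist E t t' + nat \<bar>int d - int d'\<bar> \<and>
                   (exch_step E ^^ k) x x'"
    using z(1,2) y(2) by (intro exI[of _ z] exI[of _ "k1 + k2"]) simp
qed
end
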